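(* Let $\Lambda$ be a locally finite $k$-graph with no sources or sinks, and let $\alpha$ be an action of $\mathbb{Z}^l$ on $\Lambda$ by automorphisms. Then $\Lambda$ is $\alpha$-cofinal if and only if $\tau^{\sigma,\alpha}$ is irreducible.
   Context: A $k$-graph is a countable category $\Lambda$ with a functor $d:\Lambda\to\mathbb{N}^k$ with unique factorisation; vertices are degree-$0$ morphisms; $v\Lambda w=\{\lambda:r(\lambda)=v,s(\lambda)=w\}$. Locally finite with no sources or sinks: for each $p$ and vertex $v$, $v\Lambda^p$ and $\Lambda^pv$ are finite and nonempty. An automorphism is a bijective degree-preserving functor. $\Lambda^\infty$ is the set of degree-preserving functors $x:\Omega_k\to\Lambda$ ($\Omega_k=\{(a,b)\in\mathbb{N}^k\times\mathbb{N}^k:a\le b\}$, $r(a,b)=(a,a)$, $s(a,b)=(b,b)$, $(a,b)(b,c)=(a,c)$, $d(a,b)=b-a$), topologised by cylinder sets $\lambda\Lambda^\infty=\{x:x(0,d(\lambda))=\lambda\}$; $x(p):=x(p,p)$; $\sigma^p(x)(0,n)=x(p,p+n)$; $\phi^\infty(x)(0,n)=\phi(x(0,n))$. $\tau^{\sigma,\alpha}_{(p,m)}=\sigma^p\circ\alpha^\infty_{-m}$, an action of $\mathbb{N}^k\times\mathbb{N}^l$ on $\Lambda^\infty$. Points $x,y$ are trajectory equivalent if $\tau^{\sigma,\alpha}_s(x)=\tau^{\sigma,\alpha}_t(y)$ for some $s,t$; $W$ is invariant if it contains every point trajectory equivalent to one of its points; $\tau^{\sigma,\alpha}$ is irreducible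 if the only open invariant subsets of $\Lambda^\infty$ are $\emptyset$ and $\Lambda^\infty$. $\Lambda$ is $\alpha$-cofinal if for every vertex $v$ and $x\in\Lambda^\infty$ there exist $p\in\mathbb{N}^k$ and $m,n\in\mathbb{N}^l$ with $\alpha_{-m}(v)\Lambda\alpha_{-n}(x(p))\ne\emptyset$. *)

theory Defs
  imports "HOL-Analysis.Analysis" "HOL-Library.Function_Algebras"
begin

text \<open>A small category whose morphisms are all elements of type 'a.
  r = range (codomain identity), s = source (domain identity),
  cmp x y is the composite "x y" (first y, then x), meaningful when s x = r y.\<close>

definition is_category :: "('a \<Rightarrow> 'a) \<Rightarrow> ('a \<Rightarrow> 'a) \<Rightarrow> ('a \<Rightarrow> 'a \<Rightarrow> 'a) \<Rightarrow> bool" where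
  "is_category r s cmp \<longleftrightarrow>
     (\<forall>x. r (r x) = r x \<and> s (r x) = r x \<and> r (s x) = s x \<and> s (s x) = s x) \<and>
     (\<forall>x y. s x = r y \<longrightarrow> r (cmp x y) = r x \<and> s (cmp x y) = s y) \<and>
     (\<forall>x y z. s x = r y \<and> s y = r z \<longrightarrow> cmp (cmp x y) z = cmp x (cmp y z)) \<and>
     (\<forall>x. cmp (r x) x = x \<and> cmp x (s x) = x)"

definition is_kgraph :: "('a \<Rightarrow> 'a) \<Rightarrow> ('a \<Rightarrow> 'a) \<Rightarrow> ('a \<Rightarrow> 'a \<Rightarrow> 'a) \<Rightarrow> ('a \<Rightarrow> ('k::finite \<Rightarrow> nat)) \<Rightarrow> bool" where
  "is_kgraph r s cmp d \<longleftrightarrow>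
     countable (UNIV :: 'a set) \<and>
     is_category r s cmp \<and>
     (\<forall>x. d (r x) = 0) \<and>
     (\<forall>x y. s x = r y \<longrightarrow> d (cmp x y) = d x + d y) \<and>
     (\<forall>lam m n. d lam = m + n \<longrightarrow>
        (\<exists>!p. s (fst p) = r (snd p) \<and> cmp (fst p) (snd p) = lam \<and> d (fst p) = m \<and> d (snd p) = n))"

definition is_vertex :: "('a \<Rightarrow> ('k \<Rightarrow> nat)) \<Rightarrow> 'a \<Rightarrow> bool" where
  "is_vertex d v \<longleftrightarrow> d v = 0"

definition locally_finite_no_sources_sinks ::
  "('a \<Rightarrow> 'a) \<Rightarrow> ('a \<Rightarrow> 'a) \<Rightarrow> ('a \<Rightarrow> ('k \<Rightarrow> nat)) \<Rightarrow> bool" where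
  "locally_finite_no_sources_sinks r s d \<longleftrightarrow>
     (\<forall>v p. is_vertex d v \<longrightarrow>
        finite {lam. r lam = v \<and> d lam = p} \<and> {lam. r lam = v \<and> d lam = p} \<noteq> {} \<and>
        finite {lam. s lam = v \<and> d lam = p} \<and> {lam. s lam = v \<and> d lam = p} \<noteq> {})"

definition is_kgraph_aut ::
  "('a \<Rightarrow> 'a) \<Rightarrow> ('a \<Rightarrow> 'a) \<Rightarrow> ('a \<Rightarrow> 'a \<Rightarrow> 'a) \<Rightarrow> ('a \<Rightarrow> ('k \<Rightarrow> nat)) \<Rightarrow> ('a \<Rightarrow> 'a) \<Rightarrow> bool" where
  "is_kgraph_aut r s cmp d phi \<longleftrightarrow>
     bij phi \<and> (\<forall>x. d (phi x) = d x) \<and>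
     (\<forall>x. phi (r x) = r (phi x) \<and> phi (s x) = s (phi x)) \<and>
     (\<forall>x y. s x = r y \<longrightarrow> phi (cmp x y) = cmp (phi x) (phi y))"

definition is_aut_action ::
  "('a \<Rightarrow> 'a) \<Rightarrow> ('a \<Rightarrow> 'a) \<Rightarrow> ('a \<Rightarrow> 'a \<Rightarrow> 'a) \<Rightarrow> ('a \<Rightarrow> ('k \<Rightarrow> nat)) \<Rightarrow>
   (('l::finite \<Rightarrow> int) \<Rightarrow> 'a \<Rightarrow> 'a) \<Rightarrow> bool" where
  "is_aut_action r s cmp d alpha \<longleftrightarrow>
     alpha 0 = id \<and> (\<forall>m n. alpha (m + n) = alpha m \<circ> alpha n) \<and>
     (\<forall>m. is_kgraph_aut r s cmp d (alpha m))"

text \<open>Infinite paths: degree-preserving functors Omega_k -> Lambda, represented as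
  functions on pairs (a,b), with the value undefined off the domain a <= b.\<close>
definition inf_paths ::
  "('a \<Rightarrow> 'a) \<Rightarrow> ('a \<Rightarrow> 'a) \<Rightarrow> ('a \<Rightarrow> 'a \<Rightarrow> 'a) \<Rightarrow> ('a \<Rightarrow> ('k \<Rightarrow> nat)) \<Rightarrow>
   ((('k \<Rightarrow> nat) \<times> ('k \<Rightarrow> nat)) \<Rightarrow> 'a) set" where
  "inf_paths r s cmp d = {x.
     (\<forall>a b. \<not> a \<le> b \<longrightarrow> x (a, b) = undefined) \<and>
     (\<forall>a b. a \<le> b \<longrightarrow> d (x (a, b)) = b - a \<and> r (x (a, b)) = x (a, a) \<and> s (x (a, b)) = x (b, b)) \<and>
     (\<forall>a b c. a \<le> b \<and> b \<le> c \<longrightarrow> x (a, c) = cmp (x (a, b)) (x (b, c)))}"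

definition cylinder ::
  "('a \<Rightarrow> 'a) \<Rightarrow> ('a \<Rightarrow> 'a) \<Rightarrow> ('a \<Rightarrow> 'a \<Rightarrow> 'a) \<Rightarrow> ('a \<Rightarrow> ('k \<Rightarrow> nat)) \<Rightarrow> 'a \<Rightarrow>
   ((('k \<Rightarrow> nat) \<times> ('k \<Rightarrow> nat)) \<Rightarrow> 'a) set" where
  "cylinder r s cmp d lam = {x \<in> inf_paths r s cmp d. x (0, d lam) = lam}"

definition path_topology ::
  "('a \<Rightarrow> 'a) \<Rightarrow> ('a \<Rightarrow> 'a) \<Rightarrow> ('a \<Rightarrow> 'a \<Rightarrow> 'a) \<Rightarrow> ('a \<Rightarrow> ('k \<Rightarrow> nat)) \<Rightarrow>
   ((('k \<Rightarrow> nat) \<times> ('k \<Rightarrow> nat)) \<Rightarrow> 'a) topology" where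
  "path_topology r s cmp d = topology_generated_by (range (cylinder r s cmp d))"

definition shift :: "('k \<Rightarrow> nat) \<Rightarrow> ((('k \<Rightarrow> nat) \<times> ('k \<Rightarrow> nat)) \<Rightarrow> 'a) \<Rightarrow>
   ((('k \<Rightarrow> nat) \<times> ('k \<Rightarrow> nat)) \<Rightarrow> 'a)" where
  "shift p x = (\<lambda>(a, b). x (a + p, b + p))"

definition path_map :: "('a \<Rightarrow> 'a) \<Rightarrow> ((('k \<Rightarrow> nat) \<times> ('k \<Rightarrow> nat)) \<Rightarrow> 'a) \<Rightarrow>
   ((('k \<Rightarrow> nat) \<times> ('k \<Rightarrow> nat)) \<Rightarrow> 'a)" where
  "path_map phi x = (\<lambda>(a, b). if a \<le> b then phi (x (a, b)) else undefined)"

definition tau :: "(('l \<Rightarrow> int) \<Rightarrow> 'a \<Rightarrow> 'a) \<Rightarrow> ('k \<Rightarrow> nat) \<Rightarrow> ('l \<Rightarrow> nat) \<Rightarrow>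
   ((('k \<Rightarrow> nat) \<times> ('k \<Rightarrow> nat)) \<Rightarrow> 'a) \<Rightarrow> ((('k \<Rightarrow> nat) \<times> ('k \<Rightarrow> nat)) \<Rightarrow> 'a)" where
  "tau alpha p m x = shift p (path_map (alpha (\<lambda>i. - int (m i))) x)"

definition traj_equiv :: "(('l \<Rightarrow> int) \<Rightarrow> 'a \<Rightarrow> 'a) \<Rightarrow>
   ((('k \<Rightarrow> nat) \<times> ('k \<Rightarrow> nat)) \<Rightarrow> 'a) \<Rightarrow> ((('k \<Rightarrow> nat) \<times> ('k \<Rightarrow> nat)) \<Rightarrow> 'a) \<Rightarrow> bool" where
  "traj_equiv alpha x y \<longleftrightarrow> (\<exists>p m q n. tau alpha p m x = tau alpha q n y)"

definition tau_invariant ::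
  "('a \<Rightarrow> 'a) \<Rightarrow> ('a \<Rightarrow> 'a) \<Rightarrow> ('a \<Rightarrow> 'a \<Rightarrow> 'a) \<Rightarrow> ('a \<Rightarrow> ('k \<Rightarrow> nat)) \<Rightarrow>
   (('l \<Rightarrow> int) \<Rightarrow> 'a \<Rightarrow> 'a) \<Rightarrow> ((('k \<Rightarrow> nat) \<times> ('k \<Rightarrow> nat)) \<Rightarrow> 'a) set \<Rightarrow> bool" where
  "tau_invariant r s cmp d alpha W \<longleftrightarrow>
     (\<forall>x \<in> W. \<forall>y \<in> inf_paths r s cmp d. traj_equiv alpha x y \<longrightarrow> y \<in> W)"

definition tau_irreducible ::
  "('a \<Rightarrow> 'a) \<Rightarrow> ('a \<Rightarrow> 'a) \<Rightarrow> ('a \<Rightarrow> 'a \<Rightarrow> 'a) \<Rightarrow> ('a \<Rightarrow> ('k \<Rightarrow> nat)) \<Rightarrow>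
   (('l \<Rightarrow> int) \<Rightarrow> 'a \<Rightarrow> 'a) \<Rightarrow> bool" where
  "tau_irreducible r s cmp d alpha \<longleftrightarrow>
     (\<forall>W. openin (path_topology r s cmp d) W \<and> tau_invariant r s cmp d alpha W \<longrightarrow>
        W = {} \<or> W = inf_paths r s cmp d)"

definition alpha_cofinal ::
  "('a \<Rightarrow> 'a) \<Rightarrow> ('a \<Rightarrow> 'a) \<Rightarrow> ('a \<Rightarrow> 'a \<Rightarrow> 'a) \<Rightarrow> ('a \<Rightarrow> ('k \<Rightarrow> nat)) \<Rightarrow>
   (('l \<Rightarrow> int) \<Rightarrow> 'a \<Rightarrow> 'a) \<Rightarrow> bool" where
  "alpha_cofinal r s cmp d alpha \<longleftrightarrow>
     (\<forall>v x. is_vertex d v \<and> x \<in> inf_paths r s cmp d \<longrightarrow>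
        (\<exists>(p::'k \<Rightarrow> nat) (m::'l \<Rightarrow> nat) (n::'l \<Rightarrow> nat).
           {lam. r lam = alpha (\<lambda>i. - int (m i)) v \<and> s lam = alpha (\<lambda>i. - int (n i)) (x (p, p))} \<noteq> {}))"

end

theory Submission imports Defs begin

lemma f_le_add: "(a::'k\<Rightarrow>nat) \<le> a + b" by (simp add: le_fun_def)
lemma f_le_add2: "(a::'k\<Rightarrow>nat) \<le> b + a" by (simp add: le_fun_def)
lemma f_add_diff: "(a::'k\<Rightarrow>nat) \<le> b \<Longrightarrow> a + (b - a) = b" by (simp add: le_fun_def fun_eq_iff)
lemma f_diff_self: "(a::'k\<Rightarrow>nat) - a = 0" by (simp add: fun_eq_iff)
lemma f_diff_0: "(a::'k\<Rightarrow>nat) - 0 = a" by (simp add: fun_eq_iff)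
lemma f_add_le: "((a::'k\<Rightarrow>nat) + p \<le> b + p) = (a \<le> b)" by (simp add: le_fun_def)
lemma f_add_diff2: "((b::'k\<Rightarrow>nat) + p) - (a + p) = b - a" by (simp add: fun_eq_iff)
lemma f_add_diff3: "((a::'k\<Rightarrow>nat) + b) - a = b" by (simp add: fun_eq_iff)
lemma f_le_trans: "(a::'k\<Rightarrow>nat) \<le> b \<Longrightarrow> b \<le> c \<Longrightarrow> a \<le> c" by (rule order_trans)
lemma f_diff_split: "(a::'k\<Rightarrow>nat) \<le> b \<Longrightarrow> b \<le> c \<Longrightarrow> c - a = (b - a) + (c - b)" by (simp add: le_fun_def fun_eq_iff)
lemma f_0_le: "0 \<le> (a::'k\<Rightarrow>nat)" by (simp add: le_fun_def)

locale kg =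
  fixes r s :: "'a \<Rightarrow> 'a" and cmp :: "'a \<Rightarrow> 'a \<Rightarrow> 'a" and d :: "'a \<Rightarrow> ('k::finite \<Rightarrow> nat)"
  assumes kg: "is_kgraph r s cmp d"
begin

lemma cat: "is_category r s cmp" using kg by (simp add: is_kgraph_def)
lemma rr[simp]: "r (r x) = r x" and sr[simp]: "s (r x) = r x" and rs[simp]: "r (s x) = s x" and ss[simp]: "s (s x) = s x"
  using cat by (auto simp: is_category_def)
lemma r_cmp: "s x = r y \<Longrightarrow> r (cmp x y) = r x" and s_cmp: "s x = r y \<Longrightarrow> s (cmp x y) = s y"
  using cat by (auto simp: is_category_def)
lemma assoc: "s x = r y \<Longrightarrow> s y = r z \<Longrightarrow> cmp (cmp x y) z = cmp x (cmp y z)"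
  using cat by (auto simp: is_category_def)
lemma cmp_r[simp]: "cmp (r x) x = x" and cmp_s[simp]: "cmp x (s x) = x"
  using cat by (auto simp: is_category_def)
lemma d_r[simp]: "d (r x) = 0" using kg by (simp add: is_kgraph_def)
lemma d_s[simp]: "d (s x) = 0" by (metis d_r rs)
lemma d_cmp: "s x = r y \<Longrightarrow> d (cmp x y) = d x + d y" using kg by (simp add: is_kgraph_def)
lemma fact_ex1: "d lam = m + n \<Longrightarrow> \<exists>!p. s (fst p) = r (snd p) \<and> cmp (fst p) (snd p) = lam \<and> d (fst p) = m \<and> d (snd p) = n"
  using kg by (simp add: is_kgraph_def)

definition pf :: "'a \<Rightarrow> ('k \<Rightarrow> nat) \<Rightarrow> 'a \<times> 'a" where
  "pf lam n = (SOME p. s (fst p) = r (snd p) \<and> cmp (fst p) (snd p) = lam \<and> d (fst p) = n \<and> d (snd p) = d lam - n)"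
definition pre where "pre lam n = fst (pf lam n)"
definition suf where "suf lam n = snd (pf lam n)"
definition seg where "seg lam a b = suf (pre lam b) a"

lemma pf_prop: assumes "n \<le> d lam"
  shows "s (pre lam n) = r (suf lam n) \<and> cmp (pre lam n) (suf lam n) = lam \<and> d (pre lam n) = n \<and> d (suf lam n) = d lam - n"
proof -
  have "d lam = n + (d lam - n)" using f_add_diff[OF assms] by simp
  from fact_ex1[OF this] have "\<exists>p. s (fst p) = r (snd p) \<and> cmp (fst p) (snd p) = lam \<and> d (fst p) = n \<and> d (snd p) = d lam - n" by blast
  from someI_ex[OF this] show ?thesis unfolding pre_def suf_def pf_def by blast
qed

lemma pf_uniq: assumes "s al = r be" "lam = cmp al be"
  shows "pre lam (d al) = al" "suf lam (d al) = be"
proof -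
  have dl: "d lam = d al + d be" using assms d_cmp by simp
  have le: "d al \<le> d lam" using dl f_le_add by simp
  have db: "d lam - d al = d be" using dl f_add_diff3 by simp
  from fact_ex1[OF dl] obtain p where "\<forall>q. (s (fst q) = r (snd q) \<and> cmp (fst q) (snd q) = lam \<and> d (fst q) = d al \<and> d (snd q) = d be) \<longrightarrow> q = p"
    by blast
  then have u: "\<And>q. s (fst q) = r (snd q) \<Longrightarrow> cmp (fst q) (snd q) = lam \<Longrightarrow> d (fst q) = d al \<Longrightarrow> d (snd q) = d be \<Longrightarrow> q = p" by blast
  have 1: "(al, be) = p" using u[of "(al,be)"] assms by simp
  have 2: "(pre lam (d al), suf lam (d al)) = p" using u[of "(pre lam (d al), suf lam (d al))"] pf_prop[OF le] db by simp
  from 1 2 show "pre lam (d al) = al" "suf lam (d al) = be" by auto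
qed

lemma vert_r: "d x = 0 \<Longrightarrow> r x = x"
  using pf_uniq(1)[of "r x" x x] pf_uniq(1)[of x "s x" x] by simp
lemma vert_s: "d x = 0 \<Longrightarrow> s x = x"
  using pf_uniq(2)[of "r x" x x] pf_uniq(2)[of x "s x" x] by simp

lemma pre_0: "pre lam 0 = r lam" using pf_uniq(1)[of "r lam" lam lam] by simp
lemma suf_0: "suf lam 0 = lam" using pf_uniq(2)[of "r lam" lam lam] by simp
lemma pre_full: "pre lam (d lam) = lam" using pf_uniq(1)[of lam "s lam" lam] by simp
lemma seg_full: "seg lam 0 (d lam) = lam" by (simp add: seg_def pre_full suf_0)

lemma seg_char: assumes "s al = r be" "s be = r ga" "lam = cmp (cmp al be) ga"
  shows "seg lam (d al) (d al + d be) = be"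
proof -
  have "pre lam (d (cmp al be)) = cmp al be" using pf_uniq(1)[of "cmp al be" ga lam] assms s_cmp by simp
  moreover have "d (cmp al be) = d al + d be" using assms d_cmp by simp
  ultimately show ?thesis using pf_uniq(2)[of al be "cmp al be"] assms by (simp add: seg_def)
qed

lemma seg_decomp: assumes "a \<le> b" "b \<le> d lam"
  shows "\<exists>al ga. s al = r (seg lam a b) \<and> s (seg lam a b) = r ga \<and> lam = cmp (cmp al (seg lam a b)) ga \<and> d al = a \<and> d (seg lam a b) = b - a"
proof -
  let ?P = "pre lam b" let ?S = "suf lam b"
  have A: "s ?P = r ?S" "cmp ?P ?S = lam" "d ?P = b" using pf_prop[OF assms(2)] by auto
  have B: "s (pre ?P a) = r (suf ?P a)" "cmp (pre ?P a) (suf ?P a) = ?P" "d (pre ?P a) = a" "d (suf ?P a) = b - a"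
    using pf_prop[of a ?P] A assms(1) by auto
  have "s (suf ?P a) = s ?P" using B s_cmp by metis
  then show ?thesis using A B unfolding seg_def by (intro exI[of _ "pre ?P a"] exI[of _ ?S]) auto
qed

lemma d_seg: "a \<le> b \<Longrightarrow> b \<le> d lam \<Longrightarrow> d (seg lam a b) = b - a"
  using seg_decomp by blast

lemma seg_comp: assumes "a \<le> b" "b \<le> c" "c \<le> d lam"
  shows "seg lam a c = cmp (seg lam a b) (seg lam b c) \<and> s (seg lam a b) = r (seg lam b c)"
proof -
  let ?X = "seg lam a c"
  have ac: "a \<le> c" using assms(1,2) by (rule order_trans)
  obtain al ga where D: "s al = r ?X" "s ?X = r ga" "lam = cmp (cmp al ?X) ga" "d al = a" "d ?X = c - a"
    using seg_decomp[OF ac assms(3)] by blast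
  have "d ?X = (b - a) + (c - b)" using D f_diff_split assms by simp
  from fact_ex1[OF this] obtain Y Z where YZ: "s Y = r Z" "cmp Y Z = ?X" "d Y = b - a" "d Z = c - b"
    by (metis fst_conv snd_conv)
  have rY: "r Y = r ?X" using YZ r_cmp by metis
  have sZ: "s Z = s ?X" using YZ s_cmp by metis
  have e1: "cmp al ?X = cmp (cmp al Y) Z" using assoc[of al Y Z] YZ D rY by simp
  have sa: "s (cmp al Y) = r Z" using s_cmp[of al Y] D rY YZ by simp
  have L2: "lam = cmp (cmp (cmp al Y) Z) ga" using D e1 by simp
  have L1: "lam = cmp (cmp al Y) (cmp Z ga)" using L2 assoc[of "cmp al Y" Z ga] sa sZ D by simp
  have rZg: "r (cmp Z ga) = r Z" using r_cmp sZ D by metis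
  have s1: "seg lam (d al) (d al + d Y) = Y"
    using seg_char[of al Y "cmp Z ga" lam] D rY YZ rZg L1 by (simp add: e1)
  have dalY: "d (cmp al Y) = b" using d_cmp[of al Y] D rY YZ f_add_diff assms by simp
  have s2: "seg lam (d (cmp al Y)) (d (cmp al Y) + d Z) = Z"
    using seg_char[of "cmp al Y" Z ga lam] sa sZ D L2 by simp
  have "d al + d Y = b" using D YZ f_add_diff assms by simp
  moreover have "d (cmp al Y) + d Z = c" using dalY YZ f_add_diff assms by simp
  ultimately have "seg lam a b = Y" "seg lam b c = Z" using s1 s2 dalY D by auto
  then show ?thesis using YZ by simp
qed

lemma pre_pre: assumes "b \<le> c" "c \<le> d lam" shows "pre (pre lam c) b = pre lam b"
proof -
  let ?P = "pre lam c"
  have A: "s ?P = r (suf lam c)" "cmp ?P (suf lam c) = lam" "d ?P = c" using pf_prop[OF assms(2)] by auto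
  have B: "s (pre ?P b) = r (suf ?P b)" "cmp (pre ?P b) (suf ?P b) = ?P" "d (pre ?P b) = b"
    using pf_prop[of b ?P] A assms(1) by auto
  have sS: "s (suf ?P b) = s ?P" using B s_cmp by metis
  have "lam = cmp (pre ?P b) (cmp (suf ?P b) (suf lam c))"
    using A B assoc[of "pre ?P b" "suf ?P b" "suf lam c"] sS by simp
  moreover have "s (pre ?P b) = r (cmp (suf ?P b) (suf lam c))" using B r_cmp sS A by simp
  ultimately show ?thesis using pf_uniq(1) B by metis
qed

lemma seg_pre: "a \<le> b \<Longrightarrow> b \<le> c \<Longrightarrow> c \<le> d lam \<Longrightarrow> seg (pre lam c) a b = seg lam a b"
  by (simp add: seg_def pre_pre)

lemma r_seg: assumes "a \<le> b" "b \<le> d lam" shows "r (seg lam a b) = seg lam a a"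
proof -
  have "seg lam a b = cmp (seg lam a a) (seg lam a b) \<and> s (seg lam a a) = r (seg lam a b)"
    using seg_comp[of a a b lam] assms by simp
  then have "r (seg lam a b) = r (seg lam a a)" using r_cmp by metis
  moreover have "d (seg lam a a) = 0" using d_seg[of a a lam] assms order_trans by (simp add: f_diff_self)
  ultimately show ?thesis using vert_r by simp
qed

lemma s_seg: assumes "a \<le> b" "b \<le> d lam" shows "s (seg lam a b) = seg lam b b"
proof -
  have "seg lam a b = cmp (seg lam a b) (seg lam b b) \<and> s (seg lam a b) = r (seg lam b b)"
    using seg_comp[of a b b lam] assms by simp
  then have "s (seg lam a b) = s (seg lam b b)" using s_cmp by metis
  moreover have "d (seg lam b b) = 0" using d_seg[of b b lam] assms by (simp add: f_diff_self)
  ultimately show ?thesis using vert_s by simp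
qed


abbreviation "IP \<equiv> inf_paths r s cmp d"

lemma ipD0: "x \<in> IP \<Longrightarrow> (\<forall>a b. \<not> a \<le> b \<longrightarrow> x (a, b) = undefined) \<and>
     (\<forall>a b. a \<le> b \<longrightarrow> d (x (a, b)) = b - a \<and> r (x (a, b)) = x (a, a) \<and> s (x (a, b)) = x (b, b)) \<and>
     (\<forall>a b c. a \<le> b \<and> b \<le> c \<longrightarrow> x (a, c) = cmp (x (a, b)) (x (b, c)))"
  by (simp only: inf_paths_def mem_Collect_eq)
lemma ipD: assumes "x \<in> IP" "a \<le> b" shows "d (x(a,b)) = b - a \<and> r (x(a,b)) = x(a,a) \<and> s (x(a,b)) = x(b,b)"
proof -
  have "\<forall>a b. a \<le> b \<longrightarrow> d (x (a, b)) = b - a \<and> r (x (a, b)) = x (a, a) \<and> s (x (a, b)) = x (b, b)"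
    using ipD0[OF assms(1)] by (rule conjunct1[OF conjunct2])
  then show ?thesis using assms(2) by (metis (no_types))
qed
lemma ip_comp: assumes "x \<in> IP" "a \<le> b" "b \<le> c" shows "x(a,c) = cmp (x(a,b)) (x(b,c))"
proof -
  have "\<forall>a b c. a \<le> b \<and> b \<le> c \<longrightarrow> x (a, c) = cmp (x (a, b)) (x (b, c))"
    using ipD0[OF assms(1)] by (rule conjunct2[OF conjunct2])
  then show ?thesis using assms(2,3) by (metis (no_types))
qed
lemma ip_undef: assumes "x \<in> IP" "\<not> a \<le> b" shows "x(a,b) = undefined"
proof -
  have "\<forall>a b. \<not> a \<le> b \<longrightarrow> x (a, b) = undefined"
    using ipD0[OF assms(1)] by (rule conjunct1)
  then show ?thesis using assms(2) by (metis (no_types))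
qed

lemma ip_pre: assumes "x \<in> IP" "n \<le> n'" shows "pre (x(0,n')) n = x(0,n)"
proof -
  have "x(0,n') = cmp (x(0,n)) (x(n,n'))" using ip_comp[OF assms(1) f_0_le assms(2)] .
  moreover have "s (x(0,n)) = r (x(n,n'))" using ipD[OF assms(1) f_0_le] ipD[OF assms(1) assms(2)] by simp
  moreover have "d (x(0,n)) = n" using ipD[OF assms(1) f_0_le] by (simp add: f_diff_0)
  ultimately show ?thesis using pf_uniq(1) by metis
qed

lemma ip_seg: assumes "x \<in> IP" "a \<le> b" "b \<le> n" shows "seg (x(0,n)) a b = x(a,b)"
proof -
  have 0: "0 \<le> a" by (rule f_0_le)
  have "x(0,n) = cmp (x(0,b)) (x(b,n))" using ip_comp[OF assms(1) order_trans[OF 0 assms(2)] assms(3)] .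
  also have "x(0,b) = cmp (x(0,a)) (x(a,b))" using ip_comp[OF assms(1) 0 assms(2)] .
  finally have e: "x(0,n) = cmp (cmp (x(0,a)) (x(a,b))) (x(b,n))" .
  have "seg (x(0,n)) (d (x(0,a))) (d (x(0,a)) + d (x(a,b))) = x(a,b)"
    apply (rule seg_char[OF _ _ e])
    using ipD[OF assms(1) 0] ipD[OF assms(1) assms(2)] ipD[OF assms(1) assms(3)] by simp_all
  moreover have "d (x(0,a)) = a" "d (x(a,b)) = b - a" using ipD[OF assms(1) 0] ipD[OF assms(1) assms(2)] by (simp_all add: f_diff_0)
  ultimately show ?thesis using f_add_diff[OF assms(2)] by simp
qed

definition mkpath :: "(('k \<Rightarrow> nat) \<Rightarrow> 'a) \<Rightarrow> (('k \<Rightarrow> nat) \<times> ('k \<Rightarrow> nat)) \<Rightarrow> 'a" where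
  "mkpath F = (\<lambda>(a,b). if a \<le> b then seg (F b) a b else undefined)"

lemma mkpath: assumes dF: "\<And>c. d (F c) = c" and coh: "\<And>c c'. c \<le> c' \<Longrightarrow> pre (F c') c = F c"
  shows "mkpath F \<in> IP" "\<And>c. mkpath F (0,c) = F c"
proof -
  have K: "mkpath F (a,b) = seg (F c) a b" if "a \<le> b" "b \<le> c" for a b c
  proof -
    have "seg (F b) a b = seg (pre (F c) b) a b" using coh[OF that(2)] by simp
    also have "\<dots> = seg (F c) a b" using seg_pre[of a b b "F c"] that dF by simp
    finally show ?thesis using that(1) by (simp add: mkpath_def)
  qed
  show "mkpath F (0,c) = F c" for c
    using K[of 0 c c] seg_full[of "F c"] dF f_0_le by simp
  show "mkpath F \<in> IP"
    unfolding inf_paths_def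
  proof (intro CollectI conjI allI impI)
    fix a b :: "'k \<Rightarrow> nat" assume "\<not> a \<le> b" then show "mkpath F (a,b) = undefined" by (simp add: mkpath_def)
  next
    fix a b :: "'k \<Rightarrow> nat" assume ab: "a \<le> b"
    have Kb: "mkpath F (a,b) = seg (F b) a b" using K[OF ab order_refl] .
    have Kaa: "mkpath F (a,a) = seg (F b) a a" using K[OF order_refl ab] .
    have Kbb: "mkpath F (b,b) = seg (F b) b b" using K[OF order_refl order_refl] .
    show "d (mkpath F (a,b)) = b - a" using Kb d_seg[OF ab] dF by simp
    show "r (mkpath F (a,b)) = mkpath F (a,a)" using Kb Kaa r_seg[OF ab] dF by simp
    show "s (mkpath F (a,b)) = mkpath F (b,b)" using Kb Kbb s_seg[OF ab] dF by simp
  next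
    fix a b c :: "'k \<Rightarrow> nat" assume "a \<le> b \<and> b \<le> c"
    then have ab: "a \<le> b" and bc: "b \<le> c" by auto
    have "mkpath F (a,c) = seg (F c) a c" using K[OF order_trans[OF ab bc] order_refl] .
    moreover have "mkpath F (a,b) = seg (F c) a b" using K[OF ab bc] .
    moreover have "mkpath F (b,c) = seg (F c) b c" using K[OF bc order_refl] .
    ultimately show "mkpath F (a,c) = cmp (mkpath F (a,b)) (mkpath F (b,c))"
      using seg_comp[OF ab bc] dF by simp
  qed
qed

lemma concat: assumes x: "x \<in> IP" and sm: "s mu = x(0,0)"
  shows "\<exists>z \<in> IP. z(0, d mu) = mu \<and> (\<forall>a b. a \<le> b \<longrightarrow> z(a + d mu, b + d mu) = x(a,b))"
proof -
  have 0: "\<And>c. (0::'k\<Rightarrow>nat) \<le> c" by (rule f_0_le)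
  define L where "L c = cmp mu (x(0,c))" for c
  have sL: "s mu = r (x(0,c))" for c using ipD[OF x 0] sm by simp
  have dL: "d (L c) = d mu + c" for c using d_cmp[OF sL] ipD[OF x 0] by (simp add: L_def f_diff_0)
  define F where "F c = pre (L c) c" for c
  have leL: "c \<le> d (L c)" for c using dL f_le_add2 by simp
  have dF: "d (F c) = c" for c using pf_prop[OF leL] by (simp add: F_def)
  have Lc: "L c' = cmp (L c) (x(c,c'))" "s (L c) = r (x(c,c'))" if "c \<le> c'" for c c'
  proof -
    have s0: "s (x(0,c)) = r (x(c,c'))" using ipD[OF x 0] ipD[OF x that] by simp
    show "L c' = cmp (L c) (x(c,c'))" using assoc[OF sL s0] ip_comp[OF x 0 that] by (simp add: L_def)
    show "s (L c) = r (x(c,c'))" using s_cmp[OF sL] s0 by (simp add: L_def)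
  qed
  have preL: "pre (L c') (d mu + c) = L c" if "c \<le> c'" for c c'
    using pf_uniq(1)[OF Lc(2)[OF that] Lc(1)[OF that]] dL by simp
  have coh: "pre (F c') c = F c" if "c \<le> c'" for c c'
  proof -
    have "pre (F c') c = pre (L c') c" using pre_pre[OF that leL] by (simp add: F_def)
    also have "\<dots> = pre (pre (L c') (d mu + c)) c"
      using pre_pre[of c "d mu + c" "L c'"] f_le_add2[of c "d mu"] dL add_left_mono[OF that] by simp
    also have "\<dots> = F c" using preL[OF that] by (simp add: F_def)
    finally show ?thesis .
  qed
  note M = mkpath[OF dF coh]
  define z where "z = mkpath F"
  have z1: "z(0, d mu) = mu"
  proof -
    have "z(0, d mu) = F (d mu)" using M(2) by (simp add: z_def)
    also have "\<dots> = mu" using pf_uniq(1)[of mu "x(0, d mu)" "L (d mu)"] sL by (simp add: F_def L_def)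
    finally show ?thesis .
  qed
  have z2: "z(a + d mu, b + d mu) = x(a,b)" if ab: "a \<le> b" for a b
  proof -
    let ?B = "b + d mu"
    have le1: "a + d mu \<le> ?B" using ab f_add_le by blast
    have le2: "?B \<le> d (L ?B)" using leL .
    have "z(a + d mu, ?B) = seg (F ?B) (a + d mu) ?B" using le1 by (simp add: z_def mkpath_def)
    also have "\<dots> = seg (L ?B) (a + d mu) ?B" using seg_pre[OF le1 order_refl le2] by (simp add: F_def)
    also have "\<dots> = x(a,b)"
    proof -
      have bB: "b \<le> ?B" using f_le_add .
      have aB: "0 \<le> a" using 0 .
      have e1: "x(0,?B) = cmp (x(0,b)) (x(b,?B))" using ip_comp[OF x 0 bB] .
      have e2: "x(0,b) = cmp (x(0,a)) (x(a,b))" using ip_comp[OF x 0 ab] .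
      have s1: "s (x(0,a)) = r (x(a,b))" "s (x(a,b)) = r (x(b,?B))" "s (x(0,b)) = r (x(b,?B))"
        using ipD[OF x 0] ipD[OF x ab] ipD[OF x bB] by auto
      have rr1: "r (x(0,a)) = x(0,0)" "r (cmp (x(0,a)) (x(a,b))) = x(0,0)" using ipD[OF x 0] r_cmp[OF s1(1)] by auto
      have "L ?B = cmp mu (cmp (cmp (x(0,a)) (x(a,b))) (x(b,?B)))" using e1 e2 by (simp add: L_def)
      also have "\<dots> = cmp (cmp mu (cmp (x(0,a)) (x(a,b)))) (x(b,?B))"
        using assoc[of mu "cmp (x(0,a)) (x(a,b))" "x(b,?B)"] sm rr1 s1 s_cmp[OF s1(1)] by simp
      also have "cmp mu (cmp (x(0,a)) (x(a,b))) = cmp (cmp mu (x(0,a))) (x(a,b))"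
        using assoc[of mu "x(0,a)" "x(a,b)"] sm rr1 s1 by simp
      finally have e: "L ?B = cmp (cmp (cmp mu (x(0,a))) (x(a,b))) (x(b,?B))" .
      have ss: "s (cmp mu (x(0,a))) = r (x(a,b))" using s_cmp[of mu "x(0,a)"] sm rr1 s1 by simp
      have "seg (L ?B) (d (cmp mu (x(0,a)))) (d (cmp mu (x(0,a))) + d (x(a,b))) = x(a,b)"
        using seg_char[OF ss s1(2) e] .
      moreover have "d (cmp mu (x(0,a))) = d mu + a" using d_cmp[of mu "x(0,a)"] sm rr1 ipD[OF x 0] by (simp add: f_diff_0)
      moreover have "d (x(a,b)) = b - a" using ipD[OF x ab] by simp
      moreover have "d mu + a + (b - a) = ?B" using f_add_diff[OF ab] by (metis add.commute add.assoc)
      ultimately show ?thesis by (simp add: add.commute)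
    qed
    finally show ?thesis .
  qed
  show ?thesis using M(1) z1 z2 by (auto simp: z_def)
qed

lemma exists_path: assumes nss: "locally_finite_no_sources_sinks r s d" and v: "d v = 0"
  shows "\<exists>y \<in> IP. y(0,0) = v"
proof -
  define one :: "'k \<Rightarrow> nat" where "one = (\<lambda>_. 1)"
  have ex: "\<exists>nu. r nu = s lam \<and> d nu = one" for lam
    using nss d_s[of lam] unfolding locally_finite_no_sources_sinks_def is_vertex_def by blast
  define nx where "nx lam = (SOME nu. r nu = s lam \<and> d nu = one)" for lam
  have nx: "r (nx lam) = s lam \<and> d (nx lam) = one" for lam using someI_ex[OF ex[of lam]] by (simp add: nx_def)
  define L where "L n = rec_nat v (\<lambda>_ l. cmp l (nx l)) n" for n
  have L0: "L 0 = v" and LS: "L (Suc n) = cmp (L n) (nx (L n))" for n by (simp_all add: L_def)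
  have dL: "d (L n) = (\<lambda>_. n)" for n
    by (induction n) (simp_all add: LS L0 v d_cmp nx one_def zero_fun_def plus_fun_def)
  have ext: "\<exists>t. s (L n) = r t \<and> L N = cmp (L n) t" if "n \<le> N" for n N
    using that
  proof (induction N)
    case 0 then show ?case by (intro exI[of _ "s (L n)"]) simp
  next
    case (Suc N)
    show ?case
    proof (cases "n \<le> N")
      case True
      then obtain t where t: "s (L n) = r t" "L N = cmp (L n) t" using Suc by blast
      have st: "s t = r (nx (L N))" using nx[of "L N"] t s_cmp by metis
      have "L (Suc N) = cmp (L n) (cmp t (nx (L N)))" using LS t assoc[OF t(1) st] by simp
      moreover have "r (cmp t (nx (L N))) = r t" using r_cmp[OF st] .
      ultimately show ?thesis using t by metis
    next
      case False then have "n = Suc N" using Suc by simp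
      then show ?thesis by (intro exI[of _ "s (L n)"]) simp
    qed
  qed
  have preL: "pre (L N) (\<lambda>_. n) = L n" if "n \<le> N" for n N
    using ext[OF that] pf_uniq(1) dL by metis
  define S where "S c = (\<Sum>i\<in>UNIV. c i)" for c :: "'k \<Rightarrow> nat"
  have cS: "c \<le> (\<lambda>_. S c)" for c
    unfolding le_fun_def S_def by (auto intro: member_le_sum)
  have Smono: "c \<le> c' \<Longrightarrow> S c \<le> S c'" for c c' unfolding S_def le_fun_def by (simp add: sum_mono)
  define F where "F c = pre (L (S c)) c" for c
  have dF: "d (F c) = c" for c using pf_prop[of c "L (S c)"] cS dL by (simp add: F_def)
  have coh: "pre (F c') c = F c" if cc: "c \<le> c'" for c c'
  proof -
    have "pre (F c') c = pre (L (S c')) c" using pre_pre[OF cc] cS dL by (simp add: F_def)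
    also have "\<dots> = pre (pre (L (S c')) (\<lambda>_. S c)) c"
      using pre_pre[of c "\<lambda>_. S c" "L (S c')"] cS dL Smono[OF cc] by (simp add: le_fun_def)
    also have "\<dots> = F c" using preL[OF Smono[OF cc]] by (simp add: F_def)
    finally show ?thesis .
  qed
  note M = mkpath[OF dF coh]
  have "F 0 = v" using pre_0 dF[of 0] vert_r[of "F 0"]
    by (metis F_def L0 S_def pre_0 sum.neutral v vert_r zero_fun_def)
  then show ?thesis using M by metis
qed

end


lemma (in kg) cyl_iff: assumes "x \<in> IP" shows "y \<in> cylinder r s cmp d (x(0,n)) \<longleftrightarrow> y \<in> IP \<and> y(0,n) = x(0,n)"
  using ipD[OF assms f_0_le[of n]] by (simp add: cylinder_def f_diff_0)

lemma (in kg) cyl_mono: assumes "x \<in> IP" "n \<le> n'"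
  shows "cylinder r s cmp d (x(0,n')) \<subseteq> cylinder r s cmp d (x(0,n))"
proof
  fix y assume "y \<in> cylinder r s cmp d (x(0,n'))"
  then have y: "y \<in> IP" "y(0,n') = x(0,n')" using cyl_iff[OF assms(1)] by auto
  have "y(0,n) = x(0,n)" using ip_pre[OF y(1) assms(2)] ip_pre[OF assms] y(2) by simp
  then show "y \<in> cylinder r s cmp d (x(0,n))" using cyl_iff[OF assms(1)] y by simp
qed

lemma (in kg) open_cyl: assumes "openin (path_topology r s cmp d) W"
  shows "W \<subseteq> IP \<and> (\<forall>x\<in>W. \<exists>n. cylinder r s cmp d (x(0,n)) \<subseteq> W)"
proof -
  have "generate_topology_on (range (cylinder r s cmp d)) W"
    using assms by (simp add: path_topology_def openin_topology_generated_by_iff)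
  then show ?thesis
  proof (induction rule: generate_topology_on.induct)
    case Empty then show ?case by simp
  next
    case (Int a b)
    show ?case
    proof (intro conjI ballI)
      show "a \<inter> b \<subseteq> IP" using Int by auto
      fix x assume x: "x \<in> a \<inter> b"
      then obtain n1 n2 where n: "cylinder r s cmp d (x(0,n1)) \<subseteq> a" "cylinder r s cmp d (x(0,n2)) \<subseteq> b"
        using Int by blast
      have xI: "x \<in> IP" using x Int by auto
      have "cylinder r s cmp d (x(0,n1+n2)) \<subseteq> a \<inter> b"
        using cyl_mono[OF xI f_le_add[of n1 n2]] cyl_mono[OF xI f_le_add2[of n2 n1]] n by blast
      then show "\<exists>n. cylinder r s cmp d (x(0,n)) \<subseteq> a \<inter> b" by blast
    qed
  next
    case (UN K) then show ?case by blast
  next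
    case (Basis c)
    then obtain lam where c: "c = cylinder r s cmp d lam" by blast
    show ?case
    proof (intro conjI ballI)
      show "c \<subseteq> IP" using c by (auto simp: cylinder_def)
      fix x assume "x \<in> c"
      then have "x(0, d lam) = lam" using c by (simp add: cylinder_def)
      then show "\<exists>n. cylinder r s cmp d (x(0,n)) \<subseteq> c" using c by (intro exI[of _ "d lam"]) simp
    qed
  qed
qed

locale kga = kg r s cmp d for r s :: "'a \<Rightarrow> 'a" and cmp :: "'a \<Rightarrow> 'a \<Rightarrow> 'a" and d :: "'a \<Rightarrow> ('k::finite \<Rightarrow> nat)" +
  fixes alpha :: "('l::finite \<Rightarrow> int) \<Rightarrow> 'a \<Rightarrow> 'a"
  assumes act: "is_aut_action r s cmp d alpha"
begin

lemma aut: "is_kgraph_aut r s cmp d (alpha g)" using act by (simp add: is_aut_action_def)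
lemma aut_d[simp]: "d (alpha g x) = d x" using aut by (simp add: is_kgraph_aut_def)
lemma aut_r: "alpha g (r x) = r (alpha g x)" using aut by (simp add: is_kgraph_aut_def)
lemma aut_s: "alpha g (s x) = s (alpha g x)" using aut by (simp add: is_kgraph_aut_def)
lemma aut_cmp: "s x = r y \<Longrightarrow> alpha g (cmp x y) = cmp (alpha g x) (alpha g y)" using aut by (simp add: is_kgraph_aut_def)
lemma alpha_add: "alpha (g + h) x = alpha g (alpha h x)" using act by (simp add: is_aut_action_def)
lemma alpha_0: "alpha 0 x = x" using act by (simp add: is_aut_action_def)

lemma alpha_ng: "alpha (\<lambda>i. - int (m i)) (alpha (\<lambda>i. - int (n i)) x) = alpha (\<lambda>i. - int ((m + n) i)) x"
proof -
  have "(\<lambda>i. - int ((m + n) i)) = (\<lambda>i. - int (m i)) + (\<lambda>i. - int (n i))" by (simp add: fun_eq_iff)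
  then show ?thesis using alpha_add by simp
qed

lemma alpha_inv: "alpha (\<lambda>i. int (m i)) (alpha (\<lambda>i. - int (m i)) x) = x"
proof -
  have "(\<lambda>i. int (m i)) + (\<lambda>i. - int (m i)) = 0" by (simp add: fun_eq_iff)
  then show ?thesis using alpha_add[of "\<lambda>i. int (m i)" "\<lambda>i. - int (m i)" x] alpha_0 by simp
qed

lemma alpha_ng0: "alpha (\<lambda>i. - int ((0::'l\<Rightarrow>nat) i)) x = x"
proof -
  have "(\<lambda>i. - int ((0::'l\<Rightarrow>nat) i)) = 0" by (simp add: fun_eq_iff)
  then show ?thesis using alpha_0 by simp
qed

lemma pm_app: "path_map phi x (a,b) = (if a \<le> b then phi (x(a,b)) else undefined)"
  by (simp add: path_map_def)

lemma pm_ip: assumes "x \<in> IP" shows "path_map (alpha g) x \<in> IP"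
  unfolding inf_paths_def
proof (intro CollectI conjI allI impI)
  fix a b :: "'k \<Rightarrow> nat"
  show "\<not> a \<le> b \<Longrightarrow> path_map (alpha g) x (a,b) = undefined" by (simp add: pm_app)
  assume ab: "a \<le> b"
  note D = ipD[OF assms ab]
  show "d (path_map (alpha g) x (a,b)) = b - a" using D ab by (simp add: pm_app)
  show "r (path_map (alpha g) x (a,b)) = path_map (alpha g) x (a,a)" using D ab by (simp add: pm_app aut_r[symmetric])
  show "s (path_map (alpha g) x (a,b)) = path_map (alpha g) x (b,b)" using D ab by (simp add: pm_app aut_s[symmetric])
next
  fix a b c :: "'k \<Rightarrow> nat" assume "a \<le> b \<and> b \<le> c"
  then have ab: "a \<le> b" and bc: "b \<le> c" by auto
  have ac: "a \<le> c" using ab bc by (rule order_trans)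
  have "s (x(a,b)) = r (x(b,c))" using ipD[OF assms ab] ipD[OF assms bc] by simp
  then show "path_map (alpha g) x (a,c) = cmp (path_map (alpha g) x (a,b)) (path_map (alpha g) x (b,c))"
    using ip_comp[OF assms ab bc] ab bc ac by (simp add: pm_app aut_cmp)
qed

lemma tau_app: "tau alpha p m x (a,b) = (if a \<le> b then alpha (\<lambda>i. - int (m i)) (x(a+p,b+p)) else undefined)"
  by (simp add: tau_def shift_def path_map_def f_add_le)

lemma shift_ip: assumes "x \<in> IP" shows "shift p x \<in> IP"
  unfolding inf_paths_def
proof (intro CollectI conjI allI impI)
  fix a b :: "'k \<Rightarrow> nat"
  show "\<not> a \<le> b \<Longrightarrow> shift p x (a,b) = undefined" using ip_undef[OF assms] by (simp add: shift_def f_add_le)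
  assume ab: "a \<le> b"
  then have ab': "a + p \<le> b + p" by (simp add: f_add_le)
  note D = ipD[OF assms ab']
  show "d (shift p x (a,b)) = b - a" using D by (simp add: shift_def f_add_diff2)
  show "r (shift p x (a,b)) = shift p x (a,a)" using D by (simp add: shift_def)
  show "s (shift p x (a,b)) = shift p x (b,b)" using D by (simp add: shift_def)
next
  fix a b c :: "'k \<Rightarrow> nat" assume "a \<le> b \<and> b \<le> c"
  then have "a + p \<le> b + p" "b + p \<le> c + p" by (auto simp: f_add_le)
  then show "shift p x (a,c) = cmp (shift p x (a,b)) (shift p x (b,c))"
    using ip_comp[OF assms] by (simp add: shift_def)
qed

lemma tau_ip: "x \<in> IP \<Longrightarrow> tau alpha p m x \<in> IP"
  unfolding tau_def by (intro shift_ip pm_ip)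

end


lemma (in kga) cof_irr: assumes cof: "alpha_cofinal r s cmp d alpha" shows "tau_irreducible r s cmp d alpha"
  unfolding tau_irreducible_def
proof (intro allI impI)
  fix W assume "openin (path_topology r s cmp d) W \<and> tau_invariant r s cmp d alpha W"
  then have op: "openin (path_topology r s cmp d) W" and inv: "tau_invariant r s cmp d alpha W" by auto
  note O = open_cyl[OF op]
  show "W = {} \<or> W = IP"
  proof (cases "W = {}")
    case True then show ?thesis by simp
  next
    case False
    then obtain x where xW: "x \<in> W" by blast
    then have xI: "x \<in> IP" using O by blast
    obtain n where cyl: "cylinder r s cmp d (x(0,n)) \<subseteq> W" using O xW by blast
    define mu where "mu = x(0,n)"
    define v where "v = x(n,n)"
    have dmu: "d mu = n" and smu: "s mu = v" using ipD[OF xI f_0_le[of n]] by (simp_all add: mu_def v_def f_diff_0)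
    have dv: "d v = 0" using ipD[OF xI order_refl[of n]] by (simp add: v_def f_diff_self)
    have "IP \<subseteq> W"
    proof
      fix y assume yI: "y \<in> IP"
      from cof dv yI obtain p m m' where "{lam. r lam = alpha (\<lambda>i. - int (m i)) v \<and> s lam = alpha (\<lambda>i. - int (m' i)) (y (p, p))} \<noteq> {}"
        unfolding alpha_cofinal_def is_vertex_def by blast
      then obtain lam where rl: "r lam = alpha (\<lambda>i. - int (m i)) v" and sl: "s lam = alpha (\<lambda>i. - int (m' i)) (y (p, p))"
        by blast
      define y2 where "y2 = tau alpha p m' y"
      have y2I: "y2 \<in> IP" using tau_ip[OF yI] by (simp add: y2_def)
      have y200: "y2(0,0) = s lam" using sl by (simp add: y2_def tau_app)
      obtain u where uI: "u \<in> IP" and u1: "u(0, d lam) = lam" and u2: "\<And>a b. a \<le> b \<Longrightarrow> u(a + d lam, b + d lam) = y2(a,b)"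
        using concat[OF y2I y200[symmetric]] by blast
      have u00: "u(0,0) = r lam" using ipD[OF uI f_0_le[of "d lam"]] u1 by simp
      define u' where "u' = path_map (alpha (\<lambda>i. int (m i))) u"
      have u'I: "u' \<in> IP" using pm_ip[OF uI] by (simp add: u'_def)
      have u'00: "u'(0,0) = v" using u00 rl alpha_inv by (simp add: u'_def pm_app)
      obtain z where zI: "z \<in> IP" and z1: "z(0, d mu) = mu" and z2: "\<And>a b. a \<le> b \<Longrightarrow> z(a + d mu, b + d mu) = u'(a,b)"
        using concat[OF u'I, of mu] smu u'00 by auto
      have zW: "z \<in> W" using cyl zI z1 dmu by (auto simp: cylinder_def mu_def)
      have "tau alpha (n + d lam) m z = tau alpha p m' y"
      proof (rule ext, clarify)
        fix a b :: "'k \<Rightarrow> nat"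
        show "tau alpha (n + d lam) m z (a,b) = tau alpha p m' y (a,b)"
        proof (cases "a \<le> b")
          case False then show ?thesis by (simp add: tau_app)
        next
          case True
          have ab': "a + d lam \<le> b + d lam" using True by (simp add: f_add_le)
          have e: "\<And>c. c + (n + d lam) = (c + d lam) + d mu" using dmu by (simp add: algebra_simps)
          have "tau alpha (n + d lam) m z (a,b) = alpha (\<lambda>i. - int (m i)) (z((a + d lam) + d mu, (b + d lam) + d mu))"
            using True by (simp add: tau_app e)
          also have "\<dots> = alpha (\<lambda>i. - int (m i)) (alpha (\<lambda>i. int (m i)) (u(a + d lam, b + d lam)))"
            using z2[OF ab'] ab' by (simp add: u'_def pm_app)
          also have "\<dots> = u(a + d lam, b + d lam)"
          proof -
            have "(\<lambda>i. - int (m i)) + (\<lambda>i. int (m i)) = 0" by (simp add: fun_eq_iff)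
            then show ?thesis using alpha_add[of "\<lambda>i. - int (m i)" "\<lambda>i. int (m i)"] alpha_0 by metis
          qed
          also have "\<dots> = y2(a,b)" using u2[OF True] .
          finally show ?thesis by (simp add: y2_def)
        qed
      qed
      then have "traj_equiv alpha z y" unfolding traj_equiv_def by blast
      then show "y \<in> W" using inv zW yI unfolding tau_invariant_def by blast
    qed
    then show ?thesis using O by blast
  qed
qed

lemma (in kga) irr_cof: assumes nss: "locally_finite_no_sources_sinks r s d" and irr: "tau_irreducible r s cmp d alpha"
  shows "alpha_cofinal r s cmp d alpha"
  unfolding alpha_cofinal_def
proof (intro allI impI)
  fix v x assume "is_vertex d v \<and> x \<in> IP"
  then have dv: "d v = 0" and xI: "x \<in> IP" by (auto simp: is_vertex_def)
  define Pr where "Pr y \<longleftrightarrow> (\<exists>p m n lam. r lam = alpha (\<lambda>i. - int (m i)) v \<and> s lam = alpha (\<lambda>i. - int (n i)) (y(p,p)))"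
    for y :: "('k \<Rightarrow> nat) \<times> ('k \<Rightarrow> nat) \<Rightarrow> 'a"
  define W where "W = {y \<in> IP. Pr y}"
  show "\<exists>p m n. {lam. r lam = alpha (\<lambda>i. - int (m i)) v \<and> s lam = alpha (\<lambda>i. - int (n i)) (x (p, p))} \<noteq> {}"
  proof (rule ccontr)
    assume "\<not> ?thesis"
    then have nPx: "\<not> Pr x" by (auto simp: Pr_def)
    define C where "C = {cylinder r s cmp d (y(0,p)) | y p. y \<in> IP \<and> (\<exists>m n lam. r lam = alpha (\<lambda>i. - int (m i)) v \<and> s lam = alpha (\<lambda>i. - int (n i)) (y(p,p)))}"
    have WC: "W = \<Union>C"
    proof
      show "W \<subseteq> \<Union>C"
      proof
        fix y assume "y \<in> W"
        then obtain p m n lam where yI: "y \<in> IP" and l: "r lam = alpha (\<lambda>i. - int (m i)) v" "s lam = alpha (\<lambda>i. - int (n i)) (y(p,p))"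
          by (auto simp: W_def Pr_def)
        have "y \<in> cylinder r s cmp d (y(0,p))" using cyl_iff[OF yI] yI by simp
        moreover have "cylinder r s cmp d (y(0,p)) \<in> C" unfolding C_def using yI l by blast
        ultimately show "y \<in> \<Union>C" by blast
      qed
    next
      show "\<Union>C \<subseteq> W"
      proof
        fix z assume "z \<in> \<Union>C"
        then obtain y p m n lam where yI: "y \<in> IP" and l: "r lam = alpha (\<lambda>i. - int (m i)) v" "s lam = alpha (\<lambda>i. - int (n i)) (y(p,p))"
          and zc: "z \<in> cylinder r s cmp d (y(0,p))" unfolding C_def by blast
        have zI: "z \<in> IP" and zy: "z(0,p) = y(0,p)" using zc cyl_iff[OF yI] by auto
        have zp: "z(p,p) = y(p,p)" using ipD[OF zI f_0_le[of p]] ipD[OF yI f_0_le[of p]] zy by metis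
        have "Pr z" unfolding Pr_def using l zp by metis
        then show "z \<in> W" using zI unfolding W_def by simp
      qed
    qed
    have op: "openin (path_topology r s cmp d) W"
      unfolding path_topology_def openin_topology_generated_by_iff WC
      by (rule generate_topology_on.UN, rule generate_topology_on.Basis) (auto simp: C_def)
    have inv: "tau_invariant r s cmp d alpha W"
      unfolding tau_invariant_def
    proof (intro ballI impI)
      fix y z assume yW: "y \<in> W" and zI: "z \<in> IP" and te: "traj_equiv alpha y z"
      from te obtain q j q' j' where eq: "tau alpha q j y = tau alpha q' j' z" unfolding traj_equiv_def by blast
      from yW obtain p m n lam where yI: "y \<in> IP" and l: "r lam = alpha (\<lambda>i. - int (m i)) v" "s lam = alpha (\<lambda>i. - int (n i)) (y(p,p))"
        by (auto simp: W_def Pr_def)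
      define P where "P = p + q"
      have pP: "p \<le> P" unfolding P_def by (rule f_le_add)
      note DP = ipD[OF yI pP]
      define lam2 where "lam2 = cmp lam (alpha (\<lambda>i. - int (n i)) (y(p,P)))"
      have c2: "s lam = r (alpha (\<lambda>i. - int (n i)) (y(p,P)))" using l DP by (simp add: aut_r[symmetric])
      have rl2: "r lam2 = r lam" using r_cmp[OF c2] by (simp add: lam2_def)
      have sl2: "s lam2 = alpha (\<lambda>i. - int (n i)) (y(P,P))" using s_cmp[OF c2] DP by (simp add: lam2_def aut_s[symmetric])
      define lam3 where "lam3 = alpha (\<lambda>i. - int (j i)) lam2"
      have rl3: "r lam3 = alpha (\<lambda>i. - int ((j + m) i)) v" using rl2 l by (simp add: lam3_def aut_r[symmetric] alpha_ng)
      have "tau alpha q j y (p,p) = tau alpha q' j' z (p,p)" using eq by simp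
      then have Y: "alpha (\<lambda>i. - int (j i)) (y(P,P)) = alpha (\<lambda>i. - int (j' i)) (z(p+q',p+q'))"
        by (simp add: tau_app P_def)
      have "s lam3 = alpha (\<lambda>i. - int (j i)) (alpha (\<lambda>i. - int (n i)) (y(P,P)))" using sl2 by (simp add: lam3_def aut_s[symmetric])
      also have "\<dots> = alpha (\<lambda>i. - int (n i)) (alpha (\<lambda>i. - int (j i)) (y(P,P)))" by (simp add: alpha_ng add.commute)
      also have "\<dots> = alpha (\<lambda>i. - int ((n + j') i)) (z(p+q',p+q'))" using Y by (simp add: alpha_ng)
      finally have sl3: "s lam3 = alpha (\<lambda>i. - int ((n + j') i)) (z(p+q',p+q'))" .
      have "Pr z" unfolding Pr_def using rl3 sl3 by blast
      then show "z \<in> W" using zI by (simp add: W_def)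
    qed
    obtain y0 where y0I: "y0 \<in> IP" and y00: "y0(0,0) = v" using exists_path[OF nss dv] by blast
    have "Pr y0" unfolding Pr_def
      using vert_r[OF dv] vert_s[OF dv] y00 alpha_ng0 by (intro exI[of _ 0] exI[of _ v]) simp
    then have "W \<noteq> {}" using y0I by (auto simp: W_def)
    moreover have "W \<noteq> IP" using xI nPx by (auto simp: W_def)
    ultimately show False using irr op inv unfolding tau_irreducible_def by blast
  qed
qed

theorem lemma5p7:
  fixes r s :: "'a \<Rightarrow> 'a" and cmp :: "'a \<Rightarrow> 'a \<Rightarrow> 'a"
    and d :: "'a \<Rightarrow> ('k::finite \<Rightarrow> nat)"
    and alpha :: "('l::finite \<Rightarrow> int) \<Rightarrow> 'a \<Rightarrow> 'a"
  assumes "is_kgraph r s cmp d"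
    and "locally_finite_no_sources_sinks r s d"
    and "is_aut_action r s cmp d alpha"
  shows "alpha_cofinal r s cmp d alpha \<longleftrightarrow> tau_irreducible r s cmp d alpha"
proof -
  interpret kga r s cmp d alpha using assms(1,3) by (simp add: kga_def kg_def kga_axioms_def)
  show ?thesis using cof_irr irr_cof[OF assms(2)] by blast
qed

end
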